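(* There is a function $C\colon(0,1]\to(0,\infty)$ with the following property. Let $\Sigma\subset\mathbb R^3$ be a smooth surface bounding a convex set $K$ with $B(0,\varepsilon)\subset K\subset B(0,1)$ for some $\varepsilon\in(0,1]$. Then every shortest path $\gamma$ on $\Sigma$ has total curvature $\Phi(\gamma)\le C(\varepsilon)$.
   Context: $B(0,r)$ is the open ball of radius $r$ centered at the origin. A shortest path on $\Sigma$ between two points is a curve in $\Sigma$ whose length equals the intrinsic distance in $\Sigma$ between them (the infimum of lengths of curves in $\Sigma$ joining them); such curves, parametrized by arc length, are smooth. The total curvature of a smooth unit-speed curve is $\Phi(\gamma)=\int|\gamma''(s)|\,ds$. *)

theory Defs
  imports "HOL-Analysis.Analysis"
begin

definition curve_length :: "(real \<Rightarrow> 'a::metric_space) \<Rightarrow> real \<Rightarrow> real \<Rightarrow> ereal" where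
  "curve_length g a b =
     (SUP p \<in> {(n, t). t 0 = a \<and> t n = b \<and> (\<forall>i<n. t i \<le> t (Suc i))}.
        ereal (\<Sum>i<fst p. dist (g (snd p i)) (g (snd p (Suc i)))))"

definition intrinsic_dist :: "'a::metric_space set \<Rightarrow> 'a \<Rightarrow> 'a \<Rightarrow> ereal" where
  "intrinsic_dist S x y =
     (INF g \<in> {g. path g \<and> path_image g \<subseteq> S \<and> pathstart g = x \<and> pathfinish g = y}.
        curve_length g 0 1)"

fun Ck_on :: "nat \<Rightarrow> 'a::euclidean_space set \<Rightarrow> ('a \<Rightarrow> real) \<Rightarrow> bool" where
  "Ck_on 0 U f = continuous_on U f"
| "Ck_on (Suc k) U f = (f differentiable_on U \<and>
      (\<forall>b\<in>Basis. Ck_on k U (\<lambda>x. frechet_derivative f (at x) b)))"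

definition smooth_fun_on :: "'a::euclidean_space set \<Rightarrow> ('a \<Rightarrow> real) \<Rightarrow> bool" where
  "smooth_fun_on U f = (\<forall>k. Ck_on k U f)"

definition smooth_surface :: "(real^3) set \<Rightarrow> bool" where
  "smooth_surface S = (\<forall>p\<in>S. \<exists>U f. open U \<and> p \<in> U \<and> smooth_fun_on U f \<and>
      (\<forall>x\<in>U. frechet_derivative f (at x) \<noteq> (\<lambda>v. 0)) \<and>
      S \<inter> U = {x\<in>U. f x = 0})"

end

theory Submission
  imports Defs
begin



lemma mono_part:
  fixes t :: "nat \<Rightarrow> real"
  assumes "\<forall>i<n. t i \<le> t (Suc i)"
  shows "i \<le> n \<Longrightarrow> t 0 \<le> t i \<and> t i \<le> t n"
proof -
  have up: "\<And>i j. i \<le> j \<Longrightarrow> j \<le> n \<Longrightarrow> t i \<le> t j"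
  proof -
    fix i j :: nat assume "i \<le> j" "j \<le> n"
    then show "t i \<le> t j"
    proof (induction j)
      case 0 then show ?case by simp
    next
      case (Suc j)
      show ?case
      proof (cases "i = Suc j")
        case True then show ?thesis by simp
      next
        case False
        then have "t i \<le> t j" using Suc by auto
        also have "t j \<le> t (Suc j)" using assms Suc by auto
        finally show ?thesis .
      qed
    qed
  qed
  assume "i \<le> n" then show ?thesis using up[of 0 i] up[of i n] by auto
qed

lemma curve_length_dom:
  fixes g :: "real \<Rightarrow> 'a::metric_space"
  assumes dom: "\<And>x y. a \<le> x \<Longrightarrow> x \<le> y \<Longrightarrow> y \<le> b \<Longrightarrow> dist (g x) (g y) \<le> F y - F x"
  shows "curve_length g a b \<le> ereal (F b - F a)"
  unfolding curve_length_def
proof (rule SUP_least, clarsimp)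
  fix n and t :: "nat \<Rightarrow> real"
  assume a: "a = t 0" and b: "b = t n" and m: "\<forall>i<n. t i \<le> t (Suc i)"
  have "(\<Sum>i<n. dist (g (t i)) (g (t (Suc i)))) \<le> (\<Sum>i<n. F (t (Suc i)) - F (t i))"
  proof (rule sum_mono)
    fix i assume "i \<in> {..<n}"
    then have "i < n" by simp
    then show "dist (g (t i)) (g (t (Suc i))) \<le> F (t (Suc i)) - F (t i)"
      using dom[of "t i" "t (Suc i)"] mono_part[OF m, of i] mono_part[OF m, of "Suc i"] m a b
      by auto
  qed
  also have "\<dots> = F (t n) - F (t 0)" by (rule sum_lessThan_telescope)
  finally show "(\<Sum>i<n. dist (g (t i)) (g (t (Suc i)))) \<le> F (t n) - F (t 0)" .
qed

lemma intrinsic_dist_le: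
  assumes "path g" "path_image g \<subseteq> S" "pathstart g = x" "pathfinish g = y"
  shows "intrinsic_dist S x y \<le> curve_length g 0 1"
  unfolding intrinsic_dist_def by (rule INF_lower) (use assms in auto)




lemma vec_mvt:
  fixes f :: "real \<Rightarrow> 'a::real_normed_vector"
  assumes "a \<le> b" "continuous_on {a..b} f"
    "\<And>x. a<x \<Longrightarrow> x<b \<Longrightarrow> (f has_vector_derivative f' x) (at x)"
    "\<And>x. a<x \<Longrightarrow> x<b \<Longrightarrow> norm (f' x) \<le> B"
  shows "norm (f b - f a) \<le> B*(b-a)"
proof (cases "a = b")
  case True then show ?thesis by simp
next
  case False
  then have "a < b" using assms by simp
  have "norm (f b - f a) \<le> B*b - B*a"
    by (rule differentiable_bound_general[OF \<open>a<b\<close> assms(2), where \<phi>="\<lambda>x. B*x" and \<phi>'="\<lambda>_. B"])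
       (auto intro!: continuous_intros derivative_eq_intros assms(3,4))
  then show ?thesis by (simp add: algebra_simps)
qed

lemma deriv_int:
  assumes "(f has_vector_derivative f') (at s within {a..b})" "a < s" "s < b"
  shows "(f has_vector_derivative f') (at s)"
  using assms by (simp add: at_within_Icc_at)

lemma cont_from_deriv:
  assumes "\<And>s. s\<in>S \<Longrightarrow> (f has_vector_derivative f' s) (at s within S)"
  shows "continuous_on S f"
  using assms has_vector_derivative_continuous continuous_on_eq_continuous_within by blast

lemma curve_length_ge_part:
  assumes "t 0 = a" "t n = b" "\<forall>i<n. t i \<le> t (Suc i)"
  shows "ereal (\<Sum>i<n. dist (g (t i)) (g (t (Suc i)))) \<le> curve_length g a b"
  unfolding curve_length_def
  by (rule SUP_upper2[where i="(n,t)"]) (use assms in auto)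

lemma curve_length_ge:
  fixes \<gamma> :: "real \<Rightarrow> 'a::real_normed_vector"
  assumes L: "0 \<le> L"
    and d: "\<And>s. s\<in>{0..L} \<Longrightarrow> (\<gamma> has_vector_derivative \<gamma>' s) (at s within {0..L})"
    and n: "\<And>s. s\<in>{0..L} \<Longrightarrow> norm (\<gamma>' s) = 1"
    and c: "continuous_on {0..L} \<gamma>'"
  shows "ereal L \<le> curve_length \<gamma> 0 L"
proof (rule ereal_le_epsilon2)
  fix e :: real assume e: "0 < e"
  have cg: "continuous_on {0..L} \<gamma>" by (rule cont_from_deriv[OF d])
  show "ereal L \<le> curve_length \<gamma> 0 L + ereal e"
  proof (cases "L = 0")
    case True
    have "ereal (\<Sum>i<0. dist (\<gamma> ((\<lambda>_. 0::real) i)) (\<gamma> ((\<lambda>_. 0) (Suc i)))) \<le> curve_length \<gamma> 0 0"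
      by (rule curve_length_ge_part) auto
    then have h0: "0 \<le> curve_length \<gamma> 0 L" using True by (simp add: zero_ereal_def)
    have "(0::ereal) + 0 \<le> curve_length \<gamma> 0 L + ereal e"
      by (rule add_mono[OF h0]) (use e in simp)
    then show ?thesis using True by (simp add: zero_ereal_def)
  next
    case False
    then have Lp: "L > 0" using L by simp
    define \<eta> where "\<eta> = e / L"
    have \<eta>: "\<eta> > 0" using e Lp by (simp add: \<eta>_def)
    have uc: "uniformly_continuous_on {0..L} \<gamma>'"
      using c compact_uniformly_continuous compact_Icc by blast
    obtain dd where dd: "dd > 0" and ddp: "\<And>x x'. x\<in>{0..L} \<Longrightarrow> x'\<in>{0..L} \<Longrightarrow> dist x' x < dd \<Longrightarrow> dist (\<gamma>' x') (\<gamma>' x) < \<eta>"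
      using uc \<eta> unfolding uniformly_continuous_on_def by metis
    define N :: nat where "N = nat (ceiling (L/dd)) + 1"
    have Np: "N > 0" by (simp add: N_def)
    have "L/dd \<le> real (nat (ceiling (L/dd)))" by linarith
    then have "L/dd < N" by (simp add: N_def)
    then have hd: "L / N < dd" using Np dd by (simp add: field_simps)
    define h where "h = L / N"
    have hp: "h > 0" using Lp Np by (simp add: h_def)
    define t where "t i = real i * h" for i
    have t0: "t 0 = 0" and tN: "t N = L" using Np by (auto simp: t_def h_def)
    have tm: "\<forall>i<N. t i \<le> t (Suc i)" using hp by (auto simp: t_def algebra_simps)
    have step: "h - \<eta>*h \<le> dist (\<gamma> (t i)) (\<gamma> (t (Suc i)))" if i: "i < N" for i
    proof -
      let ?x = "t i" and ?y = "t (Suc i)"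
      have xy: "?y = ?x + h" by (simp add: t_def algebra_simps)
      have x0: "0 \<le> ?x" using hp by (simp add: t_def)
      have "real (Suc i) \<le> real N" using i by simp
      then have "real (Suc i) * h \<le> real N * h" using hp by (intro mult_right_mono) auto
      then have yL: "?y \<le> L" using Np by (simp add: t_def h_def)
      let ?f = "\<lambda>s. \<gamma> s - s *\<^sub>R \<gamma>' ?x"
      have "norm (?f ?y - ?f ?x) \<le> \<eta> * (?y - ?x)"
      proof (rule vec_mvt)
        show "?x \<le> ?y" using xy hp by simp
        show "continuous_on {?x..?y} ?f"
          by (intro continuous_intros continuous_on_subset[OF cg]) (use x0 yL in auto)
        fix s assume s: "?x < s" "s < ?y"
        have sin: "0 < s" "s < L" using s x0 yL by auto
        show "(?f has_vector_derivative (\<gamma>' s - \<gamma>' ?x)) (at s)"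
          using deriv_int[OF d[of s] sin] sin
          by (auto intro!: derivative_eq_intros)
        have "dist (\<gamma>' s) (\<gamma>' ?x) < \<eta>"
          by (rule ddp) (use s x0 yL xy hd h_def in \<open>auto simp: dist_real_def\<close>)
        then show "norm (\<gamma>' s - \<gamma>' ?x) \<le> \<eta>" by (simp add: dist_norm)
      qed
      then have "norm (\<gamma> ?y - \<gamma> ?x - h *\<^sub>R \<gamma>' ?x) \<le> \<eta> * h"
        using xy by (simp add: algebra_simps)
      moreover have "norm (h *\<^sub>R \<gamma>' ?x) = h" using n[of ?x] x0 yL hp xy by simp
      ultimately have "h - \<eta>*h \<le> norm (\<gamma> ?y - \<gamma> ?x)"
        using norm_triangle_ineq2[of "h *\<^sub>R \<gamma>' ?x" "\<gamma> ?y - \<gamma> ?x"]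
        by (smt (verit, ccfv_threshold) norm_minus_commute)
      then show ?thesis by (simp add: dist_norm norm_minus_commute)
    qed
    have "(\<Sum>i<N. h - \<eta>*h) \<le> (\<Sum>i<N. dist (\<gamma> (t i)) (\<gamma> (t (Suc i))))"
      by (rule sum_mono) (use step in auto)
    moreover have "(\<Sum>i<N. h - \<eta>*h) = L - e"
      using Np Lp by (simp add: h_def \<eta>_def field_simps)
    ultimately have "ereal (L - e) \<le> curve_length \<gamma> 0 L"
      using curve_length_ge_part[OF t0 tN tm, of \<gamma>] by (metis ereal_less_eq(3) order_trans)
    then have "ereal (L - e) + ereal e \<le> curve_length \<gamma> 0 L + ereal e"
      by (rule add_right_mono)
    then show ?thesis by simp
  qed
qed




definition supp :: "(real^3) set \<Rightarrow> real^3 \<Rightarrow> real^3 \<Rightarrow> bool" where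
  "supp K q n \<longleftrightarrow> norm n = 1 \<and> (\<forall>x\<in>K. x \<bullet> n \<le> q \<bullet> n)"

locale cb =
  fixes \<epsilon> :: real and K :: "(real^3) set"
  assumes ep: "0 < \<epsilon>" and cK: "convex K" and bK: "ball 0 \<epsilon> \<subseteq> K" and Kb: "K \<subseteq> ball 0 1"
begin

lemma int_ne: "interior K \<noteq> {}"
proof -
  have "ball 0 \<epsilon> \<subseteq> interior K" using bK interior_maximal by blast
  then show ?thesis using ep by auto
qed

lemma zero_int: "0 \<in> interior K"
proof -
  have "ball 0 \<epsilon> \<subseteq> interior K" using bK interior_maximal by blast
  then show ?thesis using ep by auto
qed

lemma front_closure: "frontier K \<subseteq> closure K"
  by (simp add: frontier_def)

lemma closure_norm: "x \<in> closure K \<Longrightarrow> norm x \<le> 1"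
proof -
  assume "x \<in> closure K"
  then have "x \<in> closure (ball (0::real^3) 1)" using closure_mono[OF Kb] by blast
  then show ?thesis by simp
qed

lemma supp_exists:
  assumes "q \<in> frontier K"
  obtains n where "supp K q n"
proof -
  have q1: "q \<in> closure K" using assms front_closure by blast
  have q2: "q \<notin> rel_interior K"
    using assms rel_interior_nonempty_interior[OF int_ne] by (simp add: frontier_def)
  obtain a where a: "a \<noteq> 0" "\<And>y. y \<in> closure K \<Longrightarrow> a \<bullet> q \<le> a \<bullet> y"
    using supporting_hyperplane_relative_frontier[OF cK q1 q2] by metis
  define n where "n = - (1 / norm a) *\<^sub>R a"
  have "norm n = 1" using a by (simp add: n_def)
  moreover have "x \<bullet> n \<le> q \<bullet> n" if "x \<in> K" for x
  proof -
    have "a \<bullet> q \<le> a \<bullet> x" using a(2) that closure_subset by blast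
    then have "(1/norm a) * (a \<bullet> q) \<le> (1/norm a) * (a \<bullet> x)" using a by (simp add: divide_right_mono)
    then show ?thesis by (simp add: n_def inner_commute)
  qed
  ultimately show ?thesis using that supp_def by blast
qed

lemma supp_closure:
  assumes "supp K q n" "x \<in> closure K"
  shows "x \<bullet> n \<le> q \<bullet> n"
proof -
  have "K \<subseteq> {x. x \<bullet> n \<le> q \<bullet> n}" using assms(1) by (auto simp: supp_def)
  then have "closure K \<subseteq> {x. x \<bullet> n \<le> q \<bullet> n}"
    by (rule closure_minimal) (use closed_halfspace_le[of n "q \<bullet> n"] in \<open>simp add: inner_commute\<close>)
  then show ?thesis using assms(2) by auto
qed

lemma supp_pos:
  assumes "supp K q n"
  shows "\<epsilon> \<le> q \<bullet> n"
proof (rule ccontr)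
  assume "\<not> \<epsilon> \<le> q \<bullet> n"
  define r where "r = (max (q \<bullet> n) 0 + \<epsilon>) / 2"
  have r: "0 \<le> r" "r < \<epsilon>" "q \<bullet> n < r" using \<open>\<not> \<epsilon> \<le> q \<bullet> n\<close> ep by (auto simp: r_def)
  have nn: "norm n = 1" using assms by (simp add: supp_def)
  have "r *\<^sub>R n \<in> ball 0 \<epsilon>" using r nn by simp
  then have "r *\<^sub>R n \<in> K" using bK by blast
  then have "(r *\<^sub>R n) \<bullet> n \<le> q \<bullet> n" using assms by (auto simp: supp_def)
  moreover have "(r *\<^sub>R n) \<bullet> n = r" using nn by (simp add: norm_eq_1)
  ultimately show False using r by linarith
qed

lemma supp_not_int:
  assumes "supp K q n" "q \<bullet> n \<le> z \<bullet> n"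
  shows "z \<notin> interior K"
proof
  assume "z \<in> interior K"
  then obtain r where r: "r > 0" "ball z r \<subseteq> K" using mem_interior by blast
  have nn: "norm n = 1" using assms by (simp add: supp_def)
  have "z + (r/2) *\<^sub>R n \<in> ball z r" using r nn by (simp add: dist_norm)
  then have "(z + (r/2) *\<^sub>R n) \<bullet> n \<le> q \<bullet> n" using r assms(1) by (auto simp: supp_def)
  moreover have "(z + (r/2) *\<^sub>R n) \<bullet> n = z \<bullet> n + r/2" using nn
    by (simp add: inner_add_left power2_norm_eq_inner[symmetric])
  ultimately show False using r assms(2) by simp
qed

definition P :: "real^3 \<Rightarrow> real^3" where "P = closest_point (closure K)"

lemma P_lip: "dist (P x) (P y) \<le> dist x y"
  unfolding P_def using int_ne
  by (intro closest_point_lipschitz) (auto simp: cK convex_closure)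

lemma P_self: "x \<in> closure K \<Longrightarrow> P x = x"
  unfolding P_def by (rule closest_point_self)

lemma P_front: "z \<notin> interior K \<Longrightarrow> P z \<in> frontier K"
proof -
  assume z: "z \<notin> interior K"
  have ne: "closure K \<noteq> {}" using int_ne interior_subset closure_subset by blast
  have ic: "interior (closure K) = interior K" by (rule convex_interior_closure[OF cK])
  have ne2: "interior (closure K) \<noteq> {}" using ic int_ne by simp
  have "P z \<in> rel_frontier (closure K)"
    unfolding P_def
    by (rule closest_point_in_rel_frontier)
       (use ne z ic ne2 affine_hull_nonempty_interior[OF ne2] rel_interior_nonempty_interior[OF ne2] in auto)
  then show ?thesis
    using rel_frontier_nonempty_interior[OF ne2] ic by (simp add: frontier_def)
qed

lemma radial_out:
  assumes "q \<in> frontier K" "1 \<le> \<mu>"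
  shows "\<mu> *\<^sub>R q \<notin> interior K"
proof -
  obtain n where n: "supp K q n" using supp_exists[OF assms(1)] by blast
  have "\<epsilon> \<le> q \<bullet> n" by (rule supp_pos[OF n])
  then have "q \<bullet> n \<le> (\<mu> *\<^sub>R q) \<bullet> n" using assms(2) ep
    by simp
  then show ?thesis by (rule supp_not_int[OF n])
qed

lemma big_out: "1 \<le> norm z \<Longrightarrow> z \<notin> interior K"
  using Kb interior_subset by fastforce

end



lemma dom_join:
  fixes g :: "real \<Rightarrow> 'a::metric_space"
  assumes "a \<le> m" "m \<le> b"
    and d1: "\<And>x y. a \<le> x \<Longrightarrow> x \<le> y \<Longrightarrow> y \<le> m \<Longrightarrow> dist (g x) (g y) \<le> F y - F x"
    and d2: "\<And>x y. m \<le> x \<Longrightarrow> x \<le> y \<Longrightarrow> y \<le> b \<Longrightarrow> dist (g x) (g y) \<le> F y - F x"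
  shows "\<And>x y. a \<le> x \<Longrightarrow> x \<le> y \<Longrightarrow> y \<le> b \<Longrightarrow> dist (g x) (g y) \<le> F y - F x"
proof -
  fix x y assume xy: "a \<le> x" "x \<le> y" "y \<le> b"
  show "dist (g x) (g y) \<le> F y - F x"
  proof (cases "y \<le> m")
    case True then show ?thesis using d1 xy by auto
  next
    case False
    show ?thesis
    proof (cases "m \<le> x")
      case True then show ?thesis using d2 xy by auto
    next
      case f2: False
      have "dist (g x) (g y) \<le> dist (g x) (g m) + dist (g m) (g y)" by (rule dist_triangle)
      also have "\<dots> \<le> (F m - F x) + (F y - F m)"
        using d1[of x m] d2[of m y] xy False f2 by auto
      finally show ?thesis by simp
    qed
  qed
qed

lemma dom_cont:
  fixes g :: "real \<Rightarrow> 'a::metric_space"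
  assumes cF: "continuous_on {a..b} F"
    and d: "\<And>x y. a \<le> x \<Longrightarrow> x \<le> y \<Longrightarrow> y \<le> b \<Longrightarrow> dist (g x) (g y) \<le> F y - F x"
  shows "continuous_on {a..b} g"
  unfolding continuous_on_iff
proof (intro ballI allI impI)
  fix x e assume x: "x \<in> {a..b}" and e: "(0::real) < e"
  obtain dd where dd: "dd > 0" "\<And>x'. x' \<in> {a..b} \<Longrightarrow> dist x' x < dd \<Longrightarrow> dist (F x') (F x) < e"
    using cF x e unfolding continuous_on_iff by metis
  show "\<exists>d>0. \<forall>x'\<in>{a..b}. dist x' x < d \<longrightarrow> dist (g x') (g x) < e"
  proof (intro exI[of _ dd] conjI ballI impI)
    fix x' assume x': "x' \<in> {a..b}" "dist x' x < dd"
    have "dist (g x') (g x) \<le> \<bar>F x' - F x\<bar>"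
    proof (cases "x' \<le> x")
      case True then show ?thesis using d[of x' x] x x' by auto
    next
      case False then show ?thesis using d[of x x'] x x' by (auto simp: dist_commute)
    qed
    also have "\<dots> < e" using dd(2)[OF x'] by (simp add: dist_real_def)
    finally show "dist (g x') (g x) < e" .
  qed (use dd in auto)
qed

context cb begin

lemma front_ne0: "x \<in> frontier K \<Longrightarrow> x \<noteq> 0"
  using zero_int by (auto simp: frontier_def)

lemma diam:
  assumes x: "x \<in> frontier K" and y: "y \<in> frontier K"
  shows "intrinsic_dist (frontier K) x y \<le> ereal 54"
proof -
  have x0: "x \<noteq> 0" and y0: "y \<noteq> 0" using front_ne0 x y by auto
  have xn: "norm x \<le> 1" and yn: "norm y \<le> 1" using closure_norm front_closure x y by auto
  define a where "a = (1/norm x) *\<^sub>R x"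
  define b where "b = (1/norm y) *\<^sub>R y"
  have na: "norm a = 1" and nb: "norm b = 1" using x0 y0 by (auto simp: a_def b_def)
  have "dim {a, b} \<le> card {a,b}" by (rule dim_le_card') simp
  also have "\<dots> \<le> 2" by (simp add: card_insert_le_m1)
  finally have "dim {a,b} < DIM(real^3)" by simp
  then obtain c0 where c0: "c0 \<noteq> 0" "\<And>z. z \<in> span {a,b} \<Longrightarrow> orthogonal c0 z"
    using orthogonal_to_subspace_exists by blast
  define c where "c = (1/norm c0) *\<^sub>R c0"
  have nc: "norm c = 1" using c0 by (simp add: c_def)
  have ca: "c \<bullet> a = 0" and cb: "c \<bullet> b = 0"
    using c0(2)[of a] c0(2)[of b] by (auto simp: c_def orthogonal_def span_base)
  define R :: real where "R = 6"
  define q where "q s = ((1-s) *\<^sub>R a + s *\<^sub>R b) + (s * (1-s)) *\<^sub>R c" for s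
  have qnorm: "3/16 \<le> norm (q s)" if s: "0 \<le> s" "s \<le> 1" for s
  proof -
    have orth: "orthogonal ((1-s) *\<^sub>R a + s *\<^sub>R b) ((s * (1-s)) *\<^sub>R c)"
      using ca cb by (simp add: orthogonal_def inner_add_left inner_commute[of a c] inner_commute[of b c])
    have sq: "(norm (q s))^2 = (norm ((1-s) *\<^sub>R a + s *\<^sub>R b))^2 + (s * (1-s))^2"
      using norm_add_Pythagorean[OF orth] nc by (simp add: q_def)
    have l1: "1 - 2 * s \<le> norm ((1-s) *\<^sub>R a + s *\<^sub>R b)"
      using norm_diff_ineq[of "(1-s) *\<^sub>R a" "s *\<^sub>R b"] na nb s by simp
    have l2: "2 * s - 1 \<le> norm ((1-s) *\<^sub>R a + s *\<^sub>R b)"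
      using norm_diff_ineq[of "s *\<^sub>R b" "(1-s) *\<^sub>R a"] na nb s by (simp add: add.commute)
    show ?thesis
    proof (cases "s \<le> 1/4 \<or> 3/4 \<le> s")
      case True
      then have "1/2 \<le> norm ((1-s) *\<^sub>R a + s *\<^sub>R b)" using l1 l2 by auto
      then have "(1/2)^2 \<le> (norm ((1-s) *\<^sub>R a + s *\<^sub>R b))^2" by (rule power_mono) simp
      then have "(1/2)^2 \<le> (norm (q s))^2" using sq zero_le_power2[of "s * (1-s)"] by linarith
      then have "1/2 \<le> norm (q s)" by (rule power2_le_imp_le) simp
      then show ?thesis by simp
    next
      case False
      then have "0 \<le> (s - 1/4) * (3/4 - s)" by (intro mult_nonneg_nonneg) auto
      moreover have "(s - 1/4) * (3/4 - s) = s * (1-s) - 3/16" by (simp add: field_simps)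
      ultimately have "3/16 \<le> s * (1-s)" by linarith
      then have "(3/16)^2 \<le> (s * (1-s))^2" by (intro power_mono) auto
      then have "(3/16)^2 \<le> (norm (q s))^2" using sq by (smt (verit) zero_le_power2)
      then show ?thesis by (rule power2_le_imp_le) simp
    qed
  qed
  have qlip: "norm (q u - q v) \<le> 3 * (u - v)" if "0 \<le> v" "v \<le> u" "u \<le> 1" for u v
  proof -
    have "q u - q v = (u - v) *\<^sub>R (b - a) + ((u - v) * (1 - u - v)) *\<^sub>R c"
      by (simp add: q_def algebra_simps)
    then have "norm (q u - q v) \<le> norm ((u - v) *\<^sub>R (b - a)) + norm (((u - v) * (1 - u - v)) *\<^sub>R c)"
      by (metis norm_triangle_ineq)
    also have "\<dots> = (u - v) * norm (b - a) + (u - v) * \<bar>1 - u - v\<bar>"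
      using that nc by (simp add: abs_mult)
    also have "\<dots> \<le> (u - v) * 2 + (u - v) * 1"
    proof (intro add_mono mult_left_mono)
      show "norm (b - a) \<le> 2" using norm_triangle_ineq4[of b a] na nb by simp
      show "\<bar>1 - u - v\<bar> \<le> 1" using that by auto
    qed (use that in auto)
    finally show ?thesis by simp
  qed
  define p where "p t = (if t \<le> 1/3 then (norm x + 3 * t*(R - norm x)) *\<^sub>R a
     else if t \<le> 2/3 then R *\<^sub>R q (3 * t - 1) else (R + (3 * t-2)*(norm y - R)) *\<^sub>R b)" for t
  have p_mid: "p t = R *\<^sub>R q (3 * t - 1)" if "1/3 \<le> t" "t \<le> 2/3" for t
  proof (cases "t = 1/3")
    case True then show ?thesis by (simp add: True p_def q_def R_def)
  next
    case False then show ?thesis using that by (simp add: p_def)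
  qed
  have p_last: "p t = (R + (3 * t-2)*(norm y - R)) *\<^sub>R b" if "2/3 \<le> t" for t
  proof (cases "t = 2/3")
    case True then show ?thesis by (simp add: True p_def q_def)
  next
    case False then show ?thesis using that by (simp add: p_def)
  qed
  have p_out: "p t \<notin> interior K" if "0 \<le> t" "t \<le> 1" for t
  proof (cases "t \<le> 1/3")
    case True
    have "p t = ((norm x + 3 * t*(R - norm x)) / norm x) *\<^sub>R x" using True by (simp add: p_def a_def)
    moreover have "1 \<le> (norm x + 3 * t*(R - norm x)) / norm x"
      using x0 xn that mult_left_mono[of "norm x" 6 t] by (simp add: R_def field_simps)
    ultimately show ?thesis using radial_out[OF x] by simp
  next
    case False
    show ?thesis
    proof (cases "t \<le> 2/3")
      case True
      have "3/16 \<le> norm (q (3 * t-1))" using qnorm False True by simp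
      then have "1 \<le> norm (p t)" using p_mid[of t] False True by (simp add: R_def)
      then show ?thesis by (rule big_out)
    next
      case f2: False
      have "p t = ((R + (3 * t-2)*(norm y - R)) / norm y) *\<^sub>R y" using f2 p_last by (simp add: b_def)
      moreover have "1 \<le> (R + (3 * t-2)*(norm y - R)) / norm y"
      proof -
        have "(3 * t-2)*(R - norm y) \<le> 1*(R - norm y)" using that yn by (intro mult_right_mono) (auto simp: R_def)
        then show ?thesis using y0 yn by (simp add: field_simps R_def)
      qed
      ultimately show ?thesis using radial_out[OF y] by simp
    qed
  qed
  have dp: "dist (p u) (p v) \<le> 54 * v - 54 * u" if "0 \<le> u" "u \<le> v" "v \<le> 1" for u v
  proof (rule dom_join[of 0 "2/3" 1 p "\<lambda>t. 54 * t"])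
    fix u v :: real assume uv: "0 \<le> u" "u \<le> v" "v \<le> 2/3"
    show "dist (p u) (p v) \<le> 54 * v - 54 * u"
    proof (rule dom_join[of 0 "1/3" "2/3" p "\<lambda>t. 54 * t"])
      fix u v :: real assume uv: "0 \<le> u" "u \<le> v" "v \<le> 1/3"
      have "dist (p u) (p v) = norm (p v - p u)" by (simp add: dist_norm norm_minus_commute)
      also have "\<dots> = norm ((3*(v-u)*(R - norm x)) *\<^sub>R a)"
        using uv by (simp add: p_def algebra_simps)
      also have "\<dots> = 3*(v-u)*(R - norm x)" using na uv xn by (simp add: R_def)
      also have "\<dots> \<le> 54 * v - 54 * u"
      proof -
        have "0 \<le> (v-u) * norm x" using uv by simp
        moreover have "3*(v-u)*(R - norm x) = 18*(v-u) - 3*((v-u) * norm x)" by (simp add: R_def algebra_simps)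
        ultimately show ?thesis using uv by (smt (verit))
      qed
      finally show "dist (p u) (p v) \<le> 54 * v - 54 * u" .
    next
      fix u v :: real assume uv: "1/3 \<le> u" "u \<le> v" "v \<le> 2/3"
      have "dist (p u) (p v) = R * norm (q (3* v-1) - q (3* u-1))"
        using uv p_mid[of u] p_mid[of v] by (simp add: dist_norm R_def norm_minus_commute flip: scaleR_diff_right)
      also have "\<dots> \<le> R * (3 * ((3* v-1) - (3* u-1)))"
        using qlip[of "3* u-1" "3* v-1"] uv by (intro mult_left_mono) (auto simp: R_def)
      finally show "dist (p u) (p v) \<le> 54 * v - 54 * u" by (simp add: R_def algebra_simps)
    qed (use uv in auto)
  next
    fix u v :: real assume uv: "2/3 \<le> u" "u \<le> v" "v \<le> 1"
    have "dist (p u) (p v) = norm (p v - p u)" by (simp add: dist_norm norm_minus_commute)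
    also have "\<dots> = norm ((3*(v-u)*(norm y - R)) *\<^sub>R b)"
      using uv by (simp add: p_last[of u] p_last[of v] algebra_simps del: scaleR_right_diff_distrib)
    also have "\<dots> = 3*(v-u)*(R - norm y)" using nb uv yn by (simp add: R_def abs_mult)
    also have "\<dots> \<le> 54 * v - 54 * u"
      proof -
        have "0 \<le> (v-u) * norm y" using uv by simp
        moreover have "3*(v-u)*(R - norm y) = 18*(v-u) - 3*((v-u) * norm y)" by (simp add: R_def algebra_simps)
        ultimately show ?thesis using uv by (smt (verit))
      qed
    finally show "dist (p u) (p v) \<le> 54 * v - 54 * u" .
  qed (use that in auto)
  define g where "g = P \<circ> p"
  have dg: "dist (g u) (g v) \<le> 54 * v - 54 * u" if "0 \<le> u" "u \<le> v" "v \<le> 1" for u v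
    using P_lip[of "p u" "p v"] dp[OF that] by (simp add: g_def)
  have "path g" unfolding path_def
    by (rule dom_cont[where F="\<lambda>t. 54 * t"]) (auto intro!: continuous_intros dg)
  moreover have "path_image g \<subseteq> frontier K"
    using p_out P_front by (auto simp: path_image_def g_def)
  moreover have "pathstart g = x"
    using x0 front_closure x by (simp add: pathstart_def g_def p_def a_def P_self subset_iff)
  moreover have "pathfinish g = y"
    using y0 front_closure y p_last[of 1] by (simp add: pathfinish_def g_def b_def P_self subset_iff)
  ultimately have "intrinsic_dist (frontier K) x y \<le> curve_length g 0 1"
    by (rule intrinsic_dist_le)
  also have "\<dots> \<le> ereal (54 * 1 - 54 * 0)"
    by (rule curve_length_dom) (rule dg, auto)
  finally show ?thesis by simp
qed

end



context cb begin

lemma smooth_local: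
  assumes sm: "smooth_surface (frontier K)" and p: "p \<in> frontier K"
  obtains U f g where "open U" "p \<in> U" "continuous_on U f" "frontier K \<inter> U = {x\<in>U. f x = 0}"
    "g \<noteq> 0" "\<forall>e>0. \<exists>d>0. \<forall>y. norm (y - p) < d \<longrightarrow> \<bar>f y - f p - (y - p) \<bullet> g\<bar> \<le> e * norm (y - p)"
proof -
  obtain U f where U: "open U" "p \<in> U" "smooth_fun_on U f"
      "\<forall>x\<in>U. frechet_derivative f (at x) \<noteq> (\<lambda>v. 0)" "frontier K \<inter> U = {x\<in>U. f x = 0}"
    using sm p unfolding smooth_surface_def by blast
  have "Ck_on (Suc 0) U f" using U(3) unfolding smooth_fun_on_def by blast
  then have dU: "f differentiable_on U" by simp
  then have cU: "continuous_on U f" by (rule differentiable_imp_continuous_on)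
  have "f differentiable at p" using dU U(1,2) differentiable_on_eq_differentiable_at by blast
  then have hd: "(f has_derivative frechet_derivative f (at p)) (at p)" by (simp add: frechet_derivative_works)
  define Df where "Df = frechet_derivative f (at p)"
  have lin: "linear Df" using hd has_derivative_linear Df_def by blast
  define g where "g = adjoint Df 1"
  have Dg: "Df x = x \<bullet> g" for x using adjoint_works[OF lin, of x 1] by (simp add: g_def)
  have "g \<noteq> 0"
  proof
    assume "g = 0"
    then have "Df = (\<lambda>v. 0)" using Dg by auto
    then show False using U(4) U(2) Df_def by auto
  qed
  moreover have "\<forall>e>0. \<exists>d>0. \<forall>y. norm (y - p) < d \<longrightarrow> \<bar>f y - f p - (y - p) \<bullet> g\<bar> \<le> e * norm (y - p)"
    using hd unfolding has_derivative_at_alt Df_def[symmetric] Dg by simp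
  ultimately show ?thesis using that U(1,2,5) cU by blast
qed

lemma supp_par:
  assumes sm: "smooth_surface (frontier K)" and p: "p \<in> frontier K" and n: "supp K p n"
    and g: "g \<noteq> 0" and U: "open U" "p \<in> U" "continuous_on U f" "frontier K \<inter> U = {x\<in>U. f x = 0}"
    and df: "\<forall>e>0. \<exists>d>0. \<forall>y. norm (y - p) < d \<longrightarrow> \<bar>f y - f p - (y - p) \<bullet> g\<bar> \<le> e * norm (y - p)"
  shows "n = ((n \<bullet> g) / (g \<bullet> g)) *\<^sub>R g"
proof (rule ccontr)
  define lam where "lam = (n \<bullet> g) / (g \<bullet> g)"
  define t where "t = n - lam *\<^sub>R g"
  assume "n \<noteq> ((n \<bullet> g) / (g \<bullet> g)) *\<^sub>R g"
  then have t0: "t \<noteq> 0" by (simp add: t_def lam_def)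
  have gg: "g \<bullet> g > 0" using g by simp
  have tg: "t \<bullet> g = 0" using gg by (simp add: t_def lam_def inner_diff_left)
  define \<theta> where "\<theta> = t \<bullet> t"
  have \<theta>: "\<theta> > 0" using t0 by (simp add: \<theta>_def)
  have nt: "t \<bullet> n = \<theta>"
  proof -
    have "n = t + lam *\<^sub>R g" by (simp add: t_def)
    then have "t \<bullet> n = t \<bullet> t + lam * (t \<bullet> g)" by (metis inner_add_right inner_scaleR_right)
    then show ?thesis using tg by (simp add: \<theta>_def)
  qed
  define G where "G = norm g"
  have G: "G > 0" using g by (simp add: G_def)
  have nn: "norm n = 1" using n by (simp add: supp_def)
  have ngG: "\<bar>g \<bullet> n\<bar> \<le> G" using Cauchy_Schwarz_ineq2[of g n] nn by (simp add: G_def)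
  define a where "a = \<theta> / (2 * G)"
  have a: "a > 0" using \<theta> G by (simp add: a_def)
  define T where "T = norm t + a * G"
  have T: "T > 0" using a G t0 by (simp add: T_def add_pos_pos)
  define \<eta> where "\<eta> = a * G^2 / (2 * T)"
  have \<eta>: "\<eta> > 0" using a G T by (simp add: \<eta>_def)
  obtain d where d: "d > 0" "\<And>y. norm (y - p) < d \<Longrightarrow> \<bar>f y - f p - (y - p) \<bullet> g\<bar> \<le> \<eta> * norm (y - p)"
    using df \<eta> by blast
  obtain r where r: "r > 0" "ball p r \<subseteq> U" using U(1,2) open_contains_ball by blast
  define h where "h = min d r / (2 * T)"
  have h: "h > 0" using d r T by (simp add: h_def)
  have hT: "h * T < d" "h * T < r" using d r T by (auto simp: h_def)
  have fp: "f p = 0" using p U(2,4) by blast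
  have vb: "norm (h *\<^sub>R t + \<tau> *\<^sub>R g) \<le> h * T" if "\<bar>\<tau>\<bar> \<le> a * h" for \<tau>
  proof -
    have "norm (h *\<^sub>R t + \<tau> *\<^sub>R g) \<le> h * norm t + \<bar>\<tau>\<bar> * G"
      using norm_triangle_ineq[of "h *\<^sub>R t" "\<tau> *\<^sub>R g"] h by (simp add: G_def)
    also have "\<dots> \<le> h * norm t + a * h * G" using that G by (simp add: mult_right_mono)
    finally show ?thesis by (simp add: T_def algebra_simps)
  qed
  have inU: "p + (h *\<^sub>R t + \<tau> *\<^sub>R g) \<in> U" if "\<bar>\<tau>\<bar> \<le> a * h" for \<tau>
  proof -
    have "norm (h *\<^sub>R t + \<tau> *\<^sub>R g) < r" using vb[OF that] hT by simp
    then have "p + (h *\<^sub>R t + \<tau> *\<^sub>R g) \<in> ball p r" by (metis add.right_neutral dist_add_cancel dist_0_norm mem_ball)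
    then show ?thesis using r(2) by blast
  qed
  have est: "\<bar>f (p + (h *\<^sub>R t + \<tau> *\<^sub>R g)) - \<tau> * G^2\<bar> \<le> a * G^2 * h / 2" if "\<bar>\<tau>\<bar> \<le> a * h" for \<tau>
  proof -
    have "\<bar>f (p + (h *\<^sub>R t + \<tau> *\<^sub>R g)) - f p - (h *\<^sub>R t + \<tau> *\<^sub>R g) \<bullet> g\<bar> \<le> \<eta> * norm (h *\<^sub>R t + \<tau> *\<^sub>R g)"
      using d(2)[of "p + (h *\<^sub>R t + \<tau> *\<^sub>R g)"] vb[OF that] hT by simp
    also have "\<dots> \<le> \<eta> * (h * T)" using vb[OF that] \<eta> by (simp add: mult_left_mono)
    also have "\<dots> = a * G^2 * h / 2" using T by (simp add: \<eta>_def)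
    finally have "\<bar>f (p + (h *\<^sub>R t + \<tau> *\<^sub>R g)) - f p - (h *\<^sub>R t + \<tau> *\<^sub>R g) \<bullet> g\<bar> \<le> a * G^2 * h / 2" .
    moreover have "(h *\<^sub>R t + \<tau> *\<^sub>R g) \<bullet> g = \<tau> * G^2"
      using tg by (simp add: inner_add_left G_def power2_norm_eq_inner)
    ultimately show ?thesis using fp by simp
  qed
  have "\<exists>\<tau>\<ge>- (a*h). \<tau> \<le> a*h \<and> f (p + (h *\<^sub>R t + \<tau> *\<^sub>R g)) = 0"
  proof (rule IVT')
    have "\<bar>- (a*h)\<bar> \<le> a * h" using a h by simp
    have pos: "0 < a * G^2 * h" using a h G by simp
    have eq1: "(- (a*h)) * G^2 = - (a * G^2 * h)" by (simp add: algebra_simps)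
    have eq2: "(a*h) * G^2 = a * G^2 * h" by (simp add: algebra_simps)
    from abs_le_D1[OF est[OF \<open>\<bar>- (a*h)\<bar> \<le> a * h\<close>]]
    show "f (p + (h *\<^sub>R t + (- (a*h)) *\<^sub>R g)) \<le> 0"
      using pos unfolding eq1 by linarith
    have "\<bar>a*h\<bar> \<le> a * h" using a h by simp
    from abs_le_D2[OF est[OF this]] show "0 \<le> f (p + (h *\<^sub>R t + (a*h) *\<^sub>R g))"
      using pos unfolding eq2 by linarith
    show "- (a*h) \<le> a*h" using a h by simp
    show "continuous_on {- (a*h)..a*h} (\<lambda>\<tau>. f (p + (h *\<^sub>R t + \<tau> *\<^sub>R g)))"
      by (rule continuous_on_compose2[OF U(3)]) (auto intro!: continuous_intros inU)
  qed
  then obtain \<tau> where \<tau>: "\<bar>\<tau>\<bar> \<le> a * h" "f (p + (h *\<^sub>R t + \<tau> *\<^sub>R g)) = 0" by (metis abs_le_iff minus_le_iff)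
  define z where "z = p + (h *\<^sub>R t + \<tau> *\<^sub>R g)"
  have "z \<in> frontier K" using \<tau> inU[OF \<tau>(1)] U(4) by (auto simp: z_def)
  then have "z \<bullet> n \<le> p \<bullet> n" using supp_closure[OF n] front_closure by blast
  moreover have "z \<bullet> n = p \<bullet> n + h * \<theta> + \<tau> * (g \<bullet> n)"
    using nt by (simp add: z_def inner_add_left)
  moreover have "\<tau> * (g \<bullet> n) \<ge> - (a * h * G)"
  proof -
    have "\<bar>\<tau> * (g \<bullet> n)\<bar> \<le> a * h * G" using \<tau>(1) ngG by (simp add: abs_mult mult_mono)
    then show ?thesis by linarith
  qed
  moreover have "a * h * G = h * \<theta> / 2" using G by (simp add: a_def)
  moreover have "0 < h * \<theta>" using h \<theta> by simp
  ultimately show False by linarith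
qed

lemma supp_unique:
  assumes sm: "smooth_surface (frontier K)" and p: "p \<in> frontier K" and n: "supp K p n" and m: "supp K p m"
  shows "n = m"
proof -
  obtain U f g where U: "open U" "p \<in> U" "continuous_on U f" "frontier K \<inter> U = {x\<in>U. f x = 0}"
    "g \<noteq> 0" "\<forall>e>0. \<exists>d>0. \<forall>y. norm (y - p) < d \<longrightarrow> \<bar>f y - f p - (y - p) \<bullet> g\<bar> \<le> e * norm (y - p)"
    using smooth_local[OF sm p] by blast
  define \<alpha> where "\<alpha> = (n \<bullet> g) / (g \<bullet> g)"
  define \<beta> where "\<beta> = (m \<bullet> g) / (g \<bullet> g)"
  have na: "n = \<alpha> *\<^sub>R g" unfolding \<alpha>_def by (rule supp_par[OF sm p n U(5) U(1-4) U(6)])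
  have mb: "m = \<beta> *\<^sub>R g" unfolding \<beta>_def by (rule supp_par[OF sm p m U(5) U(1-4) U(6)])
  have "norm n = 1" "norm m = 1" using n m by (auto simp: supp_def)
  then have ab: "\<bar>\<alpha>\<bar> * norm g = 1" "\<bar>\<beta>\<bar> * norm g = 1" using na mb by auto
  have "\<epsilon> \<le> p \<bullet> n" "\<epsilon> \<le> p \<bullet> m" using supp_pos n m by auto
  then have pos: "0 < \<alpha> * (p \<bullet> g)" "0 < \<beta> * (p \<bullet> g)" using na mb ep by auto
  have ng: "norm g > 0" using U(5) by simp
  have "\<bar>\<alpha>\<bar> = 1 / norm g" using ab(1) ng by (simp add: field_simps)
  moreover have "\<bar>\<beta>\<bar> = 1 / norm g" using ab(2) ng by (simp add: field_simps)
  ultimately have eqa: "\<bar>\<alpha>\<bar> = \<bar>\<beta>\<bar>" by simp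
  have sa: "(\<alpha> > 0 \<longleftrightarrow> \<beta> > 0)" using pos by (auto simp: zero_less_mult_iff)
  have "\<alpha> \<noteq> 0" using pos by auto
  then have "\<alpha> = \<beta>" using eqa sa by (auto simp: abs_if split: if_splits)
  then show ?thesis using na mb by simp
qed

end



context cb begin

lemma supp_semicont:
  assumes sm: "smooth_surface (frontier K)" and p: "p \<in> frontier K" and nu: "supp K p \<nu>" and eta: "\<eta> > 0"
  shows "\<exists>r>0. \<forall>q n. q \<in> frontier K \<longrightarrow> dist q p < r \<longrightarrow> supp K q n \<longrightarrow> norm (n - \<nu>) < \<eta>"
proof (rule ccontr)
  assume "\<not> ?thesis"
  then have "\<forall>k::nat. \<exists>q n. q \<in> frontier K \<and> dist q p < inverse (real (Suc k)) \<and> supp K q n \<and> \<eta> \<le> norm (n - \<nu>)"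
    by (metis not_less of_nat_0_less_iff positive_imp_inverse_positive zero_less_Suc)
  then obtain Q N where QN: "\<And>k. Q k \<in> frontier K" "\<And>k. dist (Q k) p < inverse (real (Suc k))"
    "\<And>k. supp K (Q k) (N k)" "\<And>k. \<eta> \<le> norm (N k - \<nu>)"
    by metis
  have "\<forall>k. N k \<in> sphere 0 1" using QN(3) by (simp add: supp_def)
  then obtain m r where m: "m \<in> sphere 0 1" "strict_mono r" "(N \<circ> r) \<longlonglongrightarrow> m"
    using compact_imp_seq_compact[OF compact_sphere[of "0::real^3" 1]] unfolding seq_compact_def by metis
  have Qp: "Q \<longlonglongrightarrow> p"
  proof -
    have "(\<lambda>k. dist (Q k) p) \<longlonglongrightarrow> 0"
    proof (rule Lim_null_comparison[OF _ LIMSEQ_inverse_real_of_nat])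
      show "\<forall>\<^sub>F k in sequentially. norm (dist (Q k) p) \<le> inverse (real (Suc k))"
        using QN(2) by (simp add: less_imp_le)
    qed
    then show ?thesis using tendsto_dist_iff by blast
  qed
  then have Qr: "(Q \<circ> r) \<longlonglongrightarrow> p" using LIMSEQ_subseq_LIMSEQ m(2) by blast
  have "supp K p m"
    unfolding supp_def
  proof (intro conjI ballI)
    show "norm m = 1" using m(1) by simp
    fix x assume x: "x \<in> K"
    have "(\<lambda>k. x \<bullet> (N \<circ> r) k) \<longlonglongrightarrow> x \<bullet> m" by (intro tendsto_intros m(3))
    moreover have "(\<lambda>k. (Q \<circ> r) k \<bullet> (N \<circ> r) k) \<longlonglongrightarrow> p \<bullet> m" by (intro tendsto_intros m(3) Qr)
    moreover have "\<exists>M. \<forall>k\<ge>M. x \<bullet> (N \<circ> r) k \<le> (Q \<circ> r) k \<bullet> (N \<circ> r) k"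
      using QN(3) x by (auto simp: supp_def)
    ultimately show "x \<bullet> m \<le> p \<bullet> m" by (rule LIMSEQ_le)
  qed
  then have "m = \<nu>" using supp_unique[OF sm p _ nu] by blast
  have "(\<lambda>k. norm ((N \<circ> r) k - \<nu>)) \<longlonglongrightarrow> norm (m - \<nu>)" by (intro tendsto_intros m(3))
  then have "\<eta> \<le> norm (m - \<nu>)" by (rule LIMSEQ_le_const) (use QN(4) in auto)
  then show False using \<open>m = \<nu>\<close> eta by simp
qed

end



lemma unit_bound:
  fixes e v :: "'a::real_inner"
  assumes "norm e = 1"
  shows "norm (e + v) \<le> 1 + e \<bullet> v + (norm v)^2 / 2"
proof (rule power2_le_imp_le)
  have cs: "\<bar>e \<bullet> v\<bar> \<le> norm v" using Cauchy_Schwarz_ineq2[of e v] assms by simp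
  have "0 \<le> ((1 - norm v)^2 + 1) / 2" by simp
  also have "((1 - norm v)^2 + 1) / 2 = 1 - norm v + (norm v)^2 / 2" by (simp add: power2_eq_square field_simps)
  also have "\<dots> \<le> 1 + e \<bullet> v + (norm v)^2 / 2" using cs by linarith
  finally show "0 \<le> 1 + e \<bullet> v + (norm v)^2 / 2" .
  have "(norm (e + v))^2 = 1 + 2 * (e \<bullet> v) + (norm v)^2"
    using assms norm_eq_1[of e] by (simp add: power2_norm_eq_inner inner_add_left inner_add_right inner_commute)
  also have "\<dots> \<le> 1 + 2 * (e \<bullet> v) + (norm v)^2 + (e \<bullet> v + (norm v)^2 / 2)^2" by simp
  also have "\<dots> = (1 + e \<bullet> v + (norm v)^2 / 2)^2"
    by (simp add: power2_eq_square field_simps)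
  finally show "(norm (e + v))^2 \<le> (1 + e \<bullet> v + (norm v)^2 / 2)^2" .
qed

lemma vd_inner:
  assumes "(f has_vector_derivative f') (at x)" "(g has_vector_derivative g') (at x)"
  shows "((\<lambda>x. f x \<bullet> g x) has_real_derivative (f x \<bullet> g' + f' \<bullet> g x)) (at x)"
  using bounded_bilinear.has_vector_derivative[OF bounded_bilinear_inner assms]
  by (simp add: has_real_derivative_iff_has_vector_derivative)

locale geo = cb +
  fixes \<gamma> \<gamma>' \<gamma>'' :: "real \<Rightarrow> real^3" and L :: real
  assumes sm: "smooth_surface (frontier K)"
    and L0: "0 \<le> L"
    and img: "\<gamma> ` {0..L} \<subseteq> frontier K"
    and d1: "\<And>s. s\<in>{0..L} \<Longrightarrow> (\<gamma> has_vector_derivative \<gamma>' s) (at s within {0..L})"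
    and d2: "\<And>s. s\<in>{0..L} \<Longrightarrow> (\<gamma>' has_vector_derivative \<gamma>'' s) (at s within {0..L})"
    and un: "\<And>s. s\<in>{0..L} \<Longrightarrow> norm (\<gamma>' s) = 1"
    and c2: "continuous_on {0..L} \<gamma>''"
    and sp: "curve_length \<gamma> 0 L = intrinsic_dist (frontier K) (\<gamma> 0) (\<gamma> L)"
begin

lemma c0: "continuous_on {0..L} \<gamma>" by (rule cont_from_deriv[OF d1])
lemma c1: "continuous_on {0..L} \<gamma>'" by (rule cont_from_deriv[OF d2])

lemma no_shortcut:
  assumes "path g" "path_image g \<subseteq> frontier K" "pathstart g = \<gamma> 0" "pathfinish g = \<gamma> L"
  shows "ereal L \<le> curve_length g 0 1"
proof -
  have "ereal L \<le> curve_length \<gamma> 0 L" by (rule curve_length_ge[OF L0 d1 un c1])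
  also have "\<dots> \<le> curve_length g 0 1" unfolding sp by (rule intrinsic_dist_le[OF assms])
  finally show ?thesis .
qed

lemma unit_dom:
  assumes "0 \<le> x" "x \<le> y" "y \<le> L"
  shows "dist (\<gamma> x) (\<gamma> y) \<le> y - x"
proof -
  have "norm (\<gamma> y - \<gamma> x) \<le> 1 * (y - x)"
  proof (rule vec_mvt)
    show "continuous_on {x..y} \<gamma>" using c0 by (rule continuous_on_subset) (use assms in auto)
    fix t assume t: "x < t" "t < y"
    show "(\<gamma> has_vector_derivative \<gamma>' t) (at t)" using deriv_int[OF d1[of t]] t assms by auto
    show "norm (\<gamma>' t) \<le> 1" using un[of t] t assms by auto
  qed (use assms in auto)
  then show ?thesis by (simp add: dist_norm norm_minus_commute)
qed

lemma gnorm: "s \<in> {0..L} \<Longrightarrow> norm (\<gamma> s) \<le> 1"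
  using img closure_norm front_closure by blast

end



context geo begin

lemma geo_tangent:
  assumes s0: "0 < s0" "s0 < L" and nu: "supp K (\<gamma> s0) \<nu>" and w: "norm w = 1" "w \<bullet> \<nu> = 0"
  shows "\<gamma>'' s0 \<bullet> w \<le> 0"
proof (rule ccontr)
  define a where "a = \<gamma>'' s0 \<bullet> w"
  assume "\<not> \<gamma>'' s0 \<bullet> w \<le> 0"
  then have a: "a > 0" by (simp add: a_def)
  define p where "p = \<gamma> s0"
  have p: "p \<in> frontier K" using img s0 by (auto simp: p_def)
  obtain B where B: "B > 0" "\<And>s. s \<in> {0..L} \<Longrightarrow> norm (\<gamma>'' s) \<le> B"
  proof -
    have "compact (\<gamma>'' ` {0..L})" by (rule compact_continuous_image[OF c2 compact_Icc])
    then obtain B where "B > 0" "\<forall>x\<in>\<gamma>'' ` {0..L}. norm x \<le> B"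
      using compact_imp_bounded bounded_pos by metis
    then show ?thesis using that by auto
  qed
  define M where "M = a / (4 * B)"
  have M: "M > 0" using a B by (simp add: M_def)
  define \<eta> where "\<eta> = M * \<epsilon>"
  have \<eta>: "\<eta> > 0" using M ep by (simp add: \<eta>_def)
  obtain r where r: "r > 0" "\<And>q n. q \<in> frontier K \<Longrightarrow> dist q p < r \<Longrightarrow> supp K q n \<Longrightarrow> norm (n - \<nu>) < \<eta>"
    using supp_semicont[OF sm p nu[folded p_def] \<eta>] by blast
  obtain h0 where h0: "h0 > 0" "\<And>s. s \<in> {0..L} \<Longrightarrow> dist s s0 < h0 \<Longrightarrow> dist (\<gamma> s) p < r"
    using c0 s0 r(1) unfolding continuous_on_iff p_def by (metis atLeastAtMost_iff less_eq_real_def)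
  obtain h1 where h1: "h1 > 0" "\<And>s. s \<in> {0..L} \<Longrightarrow> dist s s0 < h1 \<Longrightarrow> dist (\<gamma>'' s) (\<gamma>'' s0) < a/2"
    using c2 s0 a unfolding continuous_on_iff by (metis atLeastAtMost_iff less_eq_real_def half_gt_zero)
  define h where "h = min (min (h0/2) (h1/2)) (min (s0/2) ((L-s0)/2))"
  have h: "h > 0" "h < h0" "h < h1" "h < s0" "h < L - s0" using h0 h1 s0 by (auto simp: h_def min_less_iff_disj)
  define s1 where "s1 = s0 - h"
  define s2 where "s2 = s0 + h"
  have s12: "0 < s1" "s1 < s2" "s2 < L" using h by (auto simp: s1_def s2_def)
  have inI: "s \<in> {0..L}" if "s1 \<le> s" "s \<le> s2" for s using that s12 by auto
  have near: "dist s s0 < h0" "dist s s0 < h1" if "s1 \<le> s" "s \<le> s2" for s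
    using that h by (auto simp: s1_def s2_def dist_real_def)
  define \<phi> where "\<phi> s = h^2 - (s - s0)^2" for s
  define \<phi>' where "\<phi>' s = - 2 * (s - s0)" for s
  define u where "u s = w + M *\<^sub>R \<gamma> s" for s
  define b where "b s = \<phi>' s *\<^sub>R u s + (M * \<phi> s) *\<^sub>R \<gamma>' s" for s
  define Bb where "Bb = 2 * h * (1 + M) + M * h^2"
  define \<delta> where "\<delta> = a * h^2 / (6 * (Bb^2 + 1))"
  have \<delta>: "\<delta> > 0" unfolding \<delta>_def using a h
    by (intro divide_pos_pos mult_pos_pos) (auto, smt (verit) zero_le_power2)
  define c where "c s = \<gamma> s + (\<delta> * \<phi> s) *\<^sub>R u s" for s
  define \<Psi> where "\<Psi> s = h^2 * (s - s0) - (s - s0)^3 / 3" for s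
  define F where "F s = s + \<delta> * (\<phi> s * (\<gamma>' s \<bullet> u s)) - \<delta> * (a/4) * \<Psi> s + \<delta>^2 * Bb^2 * s / 2" for s
  have phi_nn: "0 \<le> \<phi> s" "\<phi> s \<le> h^2" "\<bar>\<phi>' s\<bar> \<le> 2 * h" if "s1 \<le> s" "s \<le> s2" for s
  proof -
    have ab: "\<bar>s - s0\<bar> \<le> h" using that by (auto simp: s1_def s2_def)
    have "\<bar>s - s0\<bar>^2 \<le> h^2" by (rule power_mono[OF ab]) simp
    then show "0 \<le> \<phi> s" by (simp add: \<phi>_def)
    show "\<phi> s \<le> h^2" by (simp add: \<phi>_def)
    show "\<bar>\<phi>' s\<bar> \<le> 2 * h" using ab by (simp add: \<phi>'_def abs_mult)
  qed
  have bbound: "norm (b s) \<le> Bb" if "s1 \<le> s" "s \<le> s2" for s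
  proof -
    have nu: "norm (u s) \<le> 1 + M"
    proof -
      have "norm (u s) \<le> norm w + norm (M *\<^sub>R \<gamma> s)" unfolding u_def by (rule norm_triangle_ineq)
      also have "\<dots> \<le> 1 + M * 1" using w M gnorm[OF inI[OF that]] by (simp add: mult_left_mono)
      finally show ?thesis by simp
    qed
    have "norm (b s) \<le> norm (\<phi>' s *\<^sub>R u s) + norm ((M * \<phi> s) *\<^sub>R \<gamma>' s)" unfolding b_def by (rule norm_triangle_ineq)
    also have "\<dots> = \<bar>\<phi>' s\<bar> * norm (u s) + M * \<phi> s"
      using un[OF inI[OF that]] M phi_nn[OF that] by simp
    also have "\<dots> \<le> (2 * h) * (1 + M) + M * h^2"
      using phi_nn[OF that] nu M by (intro add_mono mult_mono mult_left_mono) auto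
    finally show ?thesis by (simp add: Bb_def)
  qed
  have gd1: "(\<gamma> has_vector_derivative \<gamma>' s) (at s)" if "s1 < s" "s < s2" for s
    using deriv_int[OF d1[of s]] that s12 by auto
  have gd2: "(\<gamma>' has_vector_derivative \<gamma>'' s) (at s)" if "s1 < s" "s < s2" for s
    using deriv_int[OF d2[of s]] that s12 by auto
  have ud: "(u has_vector_derivative M *\<^sub>R \<gamma>' s) (at s)" if "s1 < s" "s < s2" for s
    unfolding u_def using gd1[OF that] by (auto intro!: derivative_eq_intros)
  have phid: "(\<phi> has_real_derivative \<phi>' s) (at s)" for s
    unfolding \<phi>_def \<phi>'_def by (auto intro!: derivative_eq_intros)
  have Psid: "(\<Psi> has_real_derivative \<phi> s) (at s)" for s
    unfolding \<Psi>_def \<phi>_def by (auto intro!: derivative_eq_intros simp: power2_eq_square)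
  have cder: "(c has_vector_derivative (\<gamma>' s + \<delta> *\<^sub>R b s)) (at s)" if "s1 < s" "s < s2" for s
  proof -
    have "(c has_vector_derivative (\<gamma>' s + ((\<delta> * \<phi> s) *\<^sub>R (M *\<^sub>R \<gamma>' s) + (\<delta> * \<phi>' s) *\<^sub>R u s))) (at s)"
      unfolding c_def by (rule derivative_eq_intros gd1[OF that] ud[OF that] phid refl | simp)+
    moreover have "\<gamma>' s + ((\<delta> * \<phi> s) *\<^sub>R (M *\<^sub>R \<gamma>' s) + (\<delta> * \<phi>' s) *\<^sub>R u s) = \<gamma>' s + \<delta> *\<^sub>R b s"
      by (simp add: b_def algebra_simps)
    ultimately show ?thesis by simp
  qed
  have Fder: "(F has_vector_derivative (1 + \<delta> * (\<gamma>' s \<bullet> b s) + \<delta> * \<phi> s * (\<gamma>'' s \<bullet> u s) - \<delta> * (a/4) * \<phi> s + \<delta>^2 * Bb^2 / 2)) (at s)"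
    if "s1 < s" "s < s2" for s
  proof -
    have hi: "((\<lambda>s. \<gamma>' s \<bullet> u s) has_real_derivative (\<gamma>' s \<bullet> (M *\<^sub>R \<gamma>' s) + \<gamma>'' s \<bullet> u s)) (at s)"
      by (rule vd_inner[OF gd2[OF that] ud[OF that]])
    have "(F has_real_derivative (1 + \<delta> * (\<phi>' s * (\<gamma>' s \<bullet> u s) + \<phi> s * (\<gamma>' s \<bullet> (M *\<^sub>R \<gamma>' s) + \<gamma>'' s \<bullet> u s)) - \<delta> * (a/4) * \<phi> s + \<delta>^2 * Bb^2 / 2)) (at s)"
      unfolding F_def by (rule derivative_eq_intros hi phid Psid refl | simp)+ (simp add: algebra_simps)
    moreover have "1 + \<delta> * (\<phi>' s * (\<gamma>' s \<bullet> u s) + \<phi> s * (\<gamma>' s \<bullet> (M *\<^sub>R \<gamma>' s) + \<gamma>'' s \<bullet> u s)) - \<delta> * (a/4) * \<phi> s + \<delta>^2 * Bb^2 / 2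
       = 1 + \<delta> * (\<gamma>' s \<bullet> b s) + \<delta> * \<phi> s * (\<gamma>'' s \<bullet> u s) - \<delta> * (a/4) * \<phi> s + \<delta>^2 * Bb^2 / 2"
      by (simp add: b_def inner_add_right algebra_simps)
    ultimately show ?thesis by (metis has_real_derivative_iff_has_vector_derivative)
  qed
  have Fbound: "norm (\<gamma>' s + \<delta> *\<^sub>R b s) \<le> 1 + \<delta> * (\<gamma>' s \<bullet> b s) + \<delta> * \<phi> s * (\<gamma>'' s \<bullet> u s) - \<delta> * (a/4) * \<phi> s + \<delta>^2 * Bb^2 / 2"
    if "s1 < s" "s < s2" for s
  proof -
    have ss: "s1 \<le> s" "s \<le> s2" using that by auto
    have sI: "s \<in> {0..L}" by (rule inI[OF ss])
    have "norm (\<gamma>' s + \<delta> *\<^sub>R b s) \<le> 1 + \<gamma>' s \<bullet> (\<delta> *\<^sub>R b s) + (norm (\<delta> *\<^sub>R b s))^2 / 2"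
      by (rule unit_bound[OF un[OF sI]])
    also have "\<dots> = 1 + \<delta> * (\<gamma>' s \<bullet> b s) + \<delta>^2 * (norm (b s))^2 / 2"
      using \<delta> by (simp add: power_mult_distrib)
    also have "\<dots> \<le> 1 + \<delta> * (\<gamma>' s \<bullet> b s) + \<delta>^2 * Bb^2 / 2"
    proof -
      have "(norm (b s))^2 \<le> Bb^2" by (rule power_mono[OF bbound[OF ss]]) simp
      then have "\<delta>^2 * (norm (b s))^2 \<le> \<delta>^2 * Bb^2" by (rule mult_left_mono) simp
      then show ?thesis by simp
    qed
    also have "\<dots> \<le> 1 + \<delta> * (\<gamma>' s \<bullet> b s) + \<delta> * \<phi> s * (\<gamma>'' s \<bullet> u s) - \<delta> * (a/4) * \<phi> s + \<delta>^2 * Bb^2 / 2"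
    proof -
      have "a/2 < \<gamma>'' s \<bullet> w"
      proof -
        have "norm (\<gamma>'' s - \<gamma>'' s0) < a/2" using h1(2)[OF sI near(2)[OF ss]] by (simp add: dist_norm)
        moreover have "\<bar>(\<gamma>'' s - \<gamma>'' s0) \<bullet> w\<bar> \<le> norm (\<gamma>'' s - \<gamma>'' s0)"
          using Cauchy_Schwarz_ineq2[of "\<gamma>'' s - \<gamma>'' s0" w] w by simp
        moreover have "(\<gamma>'' s - \<gamma>'' s0) \<bullet> w = \<gamma>'' s \<bullet> w - a" by (simp add: a_def inner_diff_left)
        ultimately show ?thesis by linarith
      qed
      moreover have "\<bar>\<gamma>'' s \<bullet> \<gamma> s\<bar> \<le> B"
      proof -
        have "\<bar>\<gamma>'' s \<bullet> \<gamma> s\<bar> \<le> norm (\<gamma>'' s) * norm (\<gamma> s)" by (rule Cauchy_Schwarz_ineq2)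
        also have "\<dots> \<le> B * 1" using B(1) B(2)[OF sI] gnorm[OF sI] by (intro mult_mono) auto
        finally show ?thesis by simp
      qed
      moreover have "\<gamma>'' s \<bullet> u s = \<gamma>'' s \<bullet> w + M * (\<gamma>'' s \<bullet> \<gamma> s)" by (simp add: u_def inner_add_right)
      moreover have "M * B = a / 4" using B by (simp add: M_def)
      moreover have "M * (- (\<gamma>'' s \<bullet> \<gamma> s)) \<le> M * B"
        using M abs_le_D2[OF \<open>\<bar>\<gamma>'' s \<bullet> \<gamma> s\<bar> \<le> B\<close>] by (intro mult_left_mono) auto
      ultimately have "a/4 \<le> \<gamma>'' s \<bullet> u s" by simp
      then have "(a/4) * (\<delta> * \<phi> s) \<le> (\<gamma>'' s \<bullet> u s) * (\<delta> * \<phi> s)"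
        using \<delta> phi_nn(1)[OF ss] by (intro mult_right_mono) auto
      then show ?thesis by (simp add: algebra_simps)
    qed
    finally show ?thesis .
  qed
  have ccont: "continuous_on {s1..s2} c"
    unfolding c_def u_def \<phi>_def
    by (intro continuous_intros continuous_on_subset[OF c0]) (use s12 in auto)
  have Fcont: "continuous_on {s1..s2} F"
    unfolding F_def u_def \<phi>_def \<Psi>_def
    by (intro continuous_intros continuous_on_subset[OF c0] continuous_on_subset[OF c1]) (use s12 in auto)
  have cdom: "dist (c x) (c y) \<le> F y - F x" if xy: "s1 \<le> x" "x \<le> y" "y \<le> s2" for x y
  proof (cases "x = y")
    case True then show ?thesis by simp
  next
    case False
    then have "x < y" using xy by simp
    have "norm (c y - c x) \<le> F y - F x"
    proof (rule differentiable_bound_general[OF \<open>x < y\<close>])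
      show "continuous_on {x..y} c" by (rule continuous_on_subset[OF ccont]) (use xy in auto)
      show "continuous_on {x..y} F" by (rule continuous_on_subset[OF Fcont]) (use xy in auto)
      fix t assume t: "x < t" "t < y"
      then have t': "s1 < t" "t < s2" using xy by auto
      show "(c has_vector_derivative (\<gamma>' t + \<delta> *\<^sub>R b t)) (at t)" by (rule cder[OF t'])
      show "(F has_vector_derivative (1 + \<delta> * (\<gamma>' t \<bullet> b t) + \<delta> * \<phi> t * (\<gamma>'' t \<bullet> u t) - \<delta> * (a/4) * \<phi> t + \<delta>^2 * Bb^2 / 2)) (at t)"
        by (rule Fder[OF t'])
      show "norm (\<gamma>' t + \<delta> *\<^sub>R b t) \<le> 1 + \<delta> * (\<gamma>' t \<bullet> b t) + \<delta> * \<phi> t * (\<gamma>'' t \<bullet> u t) - \<delta> * (a/4) * \<phi> t + \<delta>^2 * Bb^2 / 2"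
        by (rule Fbound[OF t'])
    qed
    then show ?thesis by (simp add: dist_norm norm_minus_commute)
  qed
  have Fdiff: "F s2 - F s1 < s2 - s1"
  proof -
    have p1: "\<phi> s1 = 0" "\<phi> s2 = 0" by (simp_all add: \<phi>_def s1_def s2_def)
    have ps: "\<Psi> s2 - \<Psi> s1 = 4 * h^3 / 3" by (simp add: \<Psi>_def s1_def s2_def power3_eq_cube power2_eq_square field_simps)
    have Fs: "F s = s - (\<delta> * (a/4)) * \<Psi> s + (\<delta>^2 * Bb^2 / 2) * s" if "\<phi> s = 0" for s
      by (simp add: F_def that)
    have "F s2 - F s1 = (s2 - s1) - (\<delta> * (a/4)) * (\<Psi> s2 - \<Psi> s1) + (\<delta>^2 * Bb^2 / 2) * (s2 - s1)"
    proof -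
      have gen: "\<And>x2 x1 y2 y1 k1 k2::real. (x2 - k1*y2 + k2*x2) - (x1 - k1*y1 + k2*x1) = (x2 - x1) - k1*(y2-y1) + k2*(x2-x1)"
        by (simp add: algebra_simps)
      show ?thesis unfolding Fs[OF p1(1)] Fs[OF p1(2)] by (rule gen)
    qed
    then have eq: "F s2 - F s1 = (s2 - s1) - (\<delta> * (a/4)) * (4 * h^3 / 3) + (\<delta>^2 * Bb^2 / 2) * (s2 - s1)"
      unfolding ps .
    have "\<delta> * Bb^2 \<le> \<delta> * (Bb^2 + 1)" using \<delta> by simp
    also have "\<delta> * (Bb^2 + 1) = a * h^2 / 6"
    proof -
      have "Bb^2 + 1 > 0" by (smt (verit) zero_le_power2)
      then show ?thesis by (simp add: \<delta>_def field_simps)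
    qed
    finally have "\<delta> * Bb^2 \<le> a * h^2 / 6" .
    moreover have "0 < a * h^2" using a h by simp
    ultimately have "\<delta> * Bb^2 < a * h^2 / 3" by linarith
    then have "(\<delta> * h) * (\<delta> * Bb^2) < (\<delta> * h) * (a * h^2 / 3)"
      using \<delta> h by (intro mult_strict_left_mono) auto
    moreover have "(\<delta>^2 * Bb^2 / 2) * (s2 - s1) = (\<delta> * h) * (\<delta> * Bb^2)" by (simp add: s1_def s2_def power2_eq_square)
    moreover have "(\<delta> * (a/4)) * (4 * h^3 / 3) = (\<delta> * h) * (a * h^2 / 3)" by (simp add: power3_eq_cube power2_eq_square)
    ultimately show ?thesis using eq by linarith
  qed
  have cout: "c s \<notin> interior K" if ss: "s1 \<le> s" "s \<le> s2" for s
  proof -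
    have sI: "s \<in> {0..L}" by (rule inI[OF ss])
    have q: "\<gamma> s \<in> frontier K" using img sI by auto
    obtain n where n: "supp K (\<gamma> s) n" using supp_exists[OF q] by blast
    have nn: "norm (n - \<nu>) < \<eta>" by (rule r(2)[OF q h0(2)[OF sI near(1)[OF ss]] n])
    have "\<bar>w \<bullet> (n - \<nu>)\<bar> \<le> norm (n - \<nu>)" using Cauchy_Schwarz_ineq2[of w "n - \<nu>"] w by simp
    then have wn: "- \<eta> \<le> w \<bullet> n" using nn w(2) by (simp add: inner_diff_right inner_commute)
    have qn: "\<epsilon> \<le> \<gamma> s \<bullet> n" by (rule supp_pos[OF n])
    have "M * \<epsilon> \<le> M * (\<gamma> s \<bullet> n)" using M qn by (intro mult_left_mono) auto
    then have "0 \<le> w \<bullet> n + M * (\<gamma> s \<bullet> n)" using wn by (simp add: \<eta>_def)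
    then have "0 \<le> (\<delta> * \<phi> s) * (w \<bullet> n + M * (\<gamma> s \<bullet> n))"
      using \<delta> phi_nn(1)[OF ss] by simp
    moreover have "c s \<bullet> n = \<gamma> s \<bullet> n + (\<delta> * \<phi> s) * (w \<bullet> n + M * (\<gamma> s \<bullet> n))"
      by (simp add: c_def u_def inner_add_left)
    ultimately have "\<gamma> s \<bullet> n \<le> c s \<bullet> n" by simp
    then show ?thesis by (rule supp_not_int[OF n])
  qed
  have cend: "c s1 = \<gamma> s1" "c s2 = \<gamma> s2" by (simp_all add: c_def \<phi>_def s1_def s2_def)
  define G where "G s = (if s1 \<le> s \<and> s \<le> s2 then P (c s) else \<gamma> s)" for s
  define FG where "FG s = (if s \<le> s1 then s else if s \<le> s2 then s1 + F s - F s1 else s - s2 + s1 + F s2 - F s1)" for s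
  have s1K: "\<gamma> s1 \<in> closure K" "\<gamma> s2 \<in> closure K"
    using img s12 front_closure by (auto simp: image_subset_iff)
  have Gg: "G x = \<gamma> x" if "x \<le> s1 \<or> s2 \<le> x" for x
  proof (cases "s1 \<le> x \<and> x \<le> s2")
    case True
    then have "x = s1 \<or> x = s2" using that by auto
    then show ?thesis using cend s1K P_self by (auto simp: G_def)
  qed (auto simp: G_def)
  have Gdom: "dist (G x) (G y) \<le> FG y - FG x" if "0 \<le> x" "x \<le> y" "y \<le> L" for x y
  proof (rule dom_join[of 0 s1 L])
    fix x y assume xy: "0 \<le> x" "x \<le> y" "y \<le> s1"
    then show "dist (G x) (G y) \<le> FG y - FG x"
      using Gg[of x] Gg[of y] unit_dom[of x y] s12 by (simp add: FG_def)
  next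
    fix x y assume xy: "s1 \<le> x" "x \<le> y" "y \<le> L"
    show "dist (G x) (G y) \<le> FG y - FG x"
    proof (rule dom_join[of s1 s2 L])
      fix x y assume xy: "s1 \<le> x" "x \<le> y" "y \<le> s2"
      have "dist (G x) (G y) = dist (P (c x)) (P (c y))" using xy by (simp add: G_def)
      also have "\<dots> \<le> dist (c x) (c y)" by (rule P_lip)
      also have "\<dots> \<le> F y - F x" by (rule cdom[OF xy])
      also have "\<dots> = FG y - FG x"
        using xy by (cases "x = s1"; cases "y = s1") (auto simp: FG_def)
      finally show "dist (G x) (G y) \<le> FG y - FG x" .
    next
      fix x y assume xy: "s2 \<le> x" "x \<le> y" "y \<le> L"
      have "dist (G x) (G y) \<le> y - x"
        using Gg[of x] Gg[of y] unit_dom[of x y] xy s12 by simp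
      also have "y - x = FG y - FG x"
        using xy s12 by (cases "x = s2"; cases "y = s2") (auto simp: FG_def)
      finally show "dist (G x) (G y) \<le> FG y - FG x" .
    qed (use xy s12 in auto)
  qed (use that s12 in auto)
  have FGcont: "continuous_on {0..L} FG"
  proof -
    have e: "FG = (\<lambda>s. if id s \<le> s1 then s else (if id s \<le> s2 then s1 + F s - F s1 else s - s2 + s1 + F s2 - F s1))"
      by (auto simp: FG_def fun_eq_iff)
    show ?thesis unfolding e
    proof (rule continuous_on_cases_le)
      show "continuous_on {x \<in> {0..L}. s1 \<le> id x} (\<lambda>s. if id s \<le> s2 then s1 + F s - F s1 else s - s2 + s1 + F s2 - F s1)"
      proof (rule continuous_on_cases_le)
        have "continuous_on {x \<in> {x \<in> {0..L}. s1 \<le> id x}. id x \<le> s2} F"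
          by (rule continuous_on_subset[OF Fcont]) auto
        then show "continuous_on {x \<in> {x \<in> {0..L}. s1 \<le> id x}. id x \<le> s2} (\<lambda>s. s1 + F s - F s1)"
          by (intro continuous_intros)
      qed (auto intro!: continuous_intros)
    qed (use s12 in \<open>auto intro!: continuous_intros\<close>)
  qed
  define g where "g t = G (L * t)" for t
  have gdom: "dist (g x) (g y) \<le> FG (L * y) - FG (L * x)" if "0 \<le> x" "x \<le> y" "y \<le> 1" for x y
    unfolding g_def by (rule Gdom) (use that L0 mult_left_le[of y L] in \<open>auto intro: mult_left_mono mult_nonneg_nonneg\<close>)
  have gcont: "continuous_on {0..1} g"
  proof (rule dom_cont[OF _ gdom])
    show "continuous_on {0..1} (\<lambda>t. FG (L * t))"
      by (rule continuous_on_compose2[OF FGcont]) (use L0 in \<open>auto intro!: continuous_intros mult_left_le\<close>)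
  qed
  have "path g" using gcont by (simp add: path_def)
  moreover have "path_image g \<subseteq> frontier K"
  proof (clarsimp simp: path_image_def)
    fix t :: real assume t: "0 \<le> t" "t \<le> 1"
    then have Lt: "L * t \<in> {0..L}" using L0 by (auto intro: mult_left_le)
    show "g t \<in> frontier K"
    proof (cases "s1 \<le> L * t \<and> L * t \<le> s2")
      case True then show ?thesis using P_front cout by (simp add: g_def G_def)
    next
      case False then show ?thesis using img Lt by (auto simp: g_def G_def)
    qed
  qed
  moreover have "pathstart g = \<gamma> 0" using s12 by (simp add: pathstart_def g_def G_def)
  moreover have "pathfinish g = \<gamma> L" using s12 by (simp add: pathfinish_def g_def G_def)
  ultimately have "ereal L \<le> curve_length g 0 1" by (rule no_shortcut)
  also have "\<dots> \<le> ereal (FG (L * 1) - FG (L * 0))"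
    by (rule curve_length_dom) (rule gdom, auto)
  also have "FG (L * 1) - FG (L * 0) = L - s2 + s1 + F s2 - F s1" using s12 by (simp add: FG_def)
  finally have "L \<le> L - s2 + s1 + F s2 - F s1" by simp
  then show False using Fdiff by simp
qed

end



context geo begin

lemma geo_sign:
  assumes s: "0 < s" "s < L" and nu: "supp K (\<gamma> s) \<nu>"
  shows "\<gamma>'' s \<bullet> \<nu> \<le> 0"
proof (rule ccontr)
  assume "\<not> \<gamma>'' s \<bullet> \<nu> \<le> 0"
  then have pos: "0 < \<gamma>'' s \<bullet> \<nu>" by simp
  define f where "f t = \<gamma> t \<bullet> \<nu>" for t
  define f1 where "f1 t = \<gamma>' t \<bullet> \<nu>" for t
  have fle: "f t \<le> f s" if "t \<in> {0..L}" for t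
  proof -
    have "\<gamma> t \<in> closure K" using img that front_closure by blast
    then show ?thesis using supp_closure[OF nu] by (simp add: f_def)
  qed
  have fd: "(f has_real_derivative f1 t) (at t)" if "0 < t" "t < L" for t
    unfolding f_def[abs_def] f1_def using vd_inner[OF deriv_int[OF d1[of t]] has_vector_derivative_const[of \<nu> "at t"]] that
    by simp
  have f1d: "(f1 has_real_derivative \<gamma>'' s \<bullet> \<nu>) (at s)"
    unfolding f1_def[abs_def] using vd_inner[OF deriv_int[OF d2[of s]] has_vector_derivative_const[of \<nu> "at s"]] s
    by simp
  have f1s: "f1 s = 0"
  proof (rule DERIV_local_max[OF fd[OF s]])
    show "0 < min s (L - s)" using s by simp
    show "\<forall>y. \<bar>s - y\<bar> < min s (L - s) \<longrightarrow> f y \<le> f s" using fle by (auto simp: abs_less_iff)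
  qed
  obtain d where d: "d > 0" "\<And>h. h > 0 \<Longrightarrow> h < d \<Longrightarrow> f1 s < f1 (s + h)"
    using DERIV_pos_inc_right[OF f1d pos] by blast
  define m where "m = min d (L - s)"
  have mm: "m \<le> L - s" "m \<le> d" "0 < m" using d s by (auto simp: m_def)
  define hh where "hh = m / 2"
  have hh: "0 < hh" "hh < d" "s + hh < L" using mm unfolding hh_def by linarith+
  obtain z where z: "s < z" "z < s + hh" "f (s + hh) - f s = (s + hh - s) * f1 z"
    using MVT2[of s "s + hh" f f1] fd hh s by force
  have "0 < f1 z" using d(2)[of "z - s"] z hh f1s by simp
  then have "0 < f (s + hh) - f s" using z hh by simp
  moreover have "f (s + hh) \<le> f s" using fle hh s by simp
  ultimately show False by simp
qed

lemma geo_curv: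
  assumes s: "0 < s" "s < L"
  shows "\<epsilon> * norm (\<gamma>'' s) \<le> - (\<gamma>'' s \<bullet> \<gamma> s)"
proof -
  have sI: "s \<in> {0..L}" using s by simp
  obtain \<nu> where nu: "supp K (\<gamma> s) \<nu>" using supp_exists img sI by blast
  have nn: "\<nu> \<bullet> \<nu> = 1" using nu by (simp add: supp_def norm_eq_1)
  define k where "k = \<gamma>'' s \<bullet> \<nu>"
  define T where "T = \<gamma>'' s - k *\<^sub>R \<nu>"
  have Tn: "T \<bullet> \<nu> = 0" using nn by (simp add: T_def k_def inner_diff_left)
  have T0: "T = 0"
  proof (rule ccontr)
    assume "T \<noteq> 0"
    define w where "w = (1 / norm T) *\<^sub>R T"
    have w: "norm w = 1" "w \<bullet> \<nu> = 0" using \<open>T \<noteq> 0\<close> Tn by (auto simp: w_def)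
    have "\<gamma>'' s \<bullet> w \<le> 0" by (rule geo_tangent[OF s nu w])
    moreover have "\<gamma>'' s \<bullet> T = T \<bullet> T"
    proof -
      have "\<gamma>'' s = T + k *\<^sub>R \<nu>" by (simp add: T_def)
      then have "\<gamma>'' s \<bullet> T = T \<bullet> T + k * (\<nu> \<bullet> T)" by (metis inner_add_left inner_scaleR_left)
      then show ?thesis using Tn by (simp add: inner_commute)
    qed
    moreover have "0 < T \<bullet> T" using \<open>T \<noteq> 0\<close> by simp
    moreover have "0 < norm T" using \<open>T \<noteq> 0\<close> by simp
    ultimately show False by (simp add: w_def divide_le_0_iff)
  qed
  then have g2: "\<gamma>'' s = k *\<^sub>R \<nu>" by (simp add: T_def)
  have k: "k \<le> 0" unfolding k_def by (rule geo_sign[OF s nu])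
  have "norm (\<gamma>'' s) = - k" using g2 k nu by (simp add: supp_def)
  moreover have "\<gamma>'' s \<bullet> \<gamma> s = k * (\<gamma> s \<bullet> \<nu>)" using g2 by (simp add: inner_commute)
  moreover have "k * (\<gamma> s \<bullet> \<nu>) \<le> k * \<epsilon>" by (rule mult_left_mono_neg[OF supp_pos[OF nu] k])
  ultimately show ?thesis by (simp add: algebra_simps)
qed

end



theorem mainTheorem18:
  shows "\<exists>C :: real \<Rightarrow> real. (\<forall>\<epsilon>\<in>{0<..1}. C \<epsilon> > 0) \<and>
    (\<forall>\<epsilon> (K :: (real^3) set) \<Sigma> (\<gamma> :: real \<Rightarrow> real^3) \<gamma>' \<gamma>'' L.
       0 < \<epsilon> \<and> \<epsilon> \<le> 1 \<and> convex K \<and> ball 0 \<epsilon> \<subseteq> K \<and> K \<subseteq> ball 0 1 \<and>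
       \<Sigma> = frontier K \<and> smooth_surface \<Sigma> \<and>
       0 \<le> L \<and> \<gamma> ` {0..L} \<subseteq> \<Sigma> \<and>
       (\<forall>s\<in>{0..L}. (\<gamma> has_vector_derivative \<gamma>' s) (at s within {0..L}) \<and>
                    (\<gamma>' has_vector_derivative \<gamma>'' s) (at s within {0..L}) \<and>
                    norm (\<gamma>' s) = 1) \<and>
       continuous_on {0..L} \<gamma>'' \<and>
       curve_length \<gamma> 0 L = intrinsic_dist \<Sigma> (\<gamma> 0) (\<gamma> L)
       \<longrightarrow> integral {0..L} (\<lambda>s. norm (\<gamma>'' s)) \<le> C \<epsilon>)"
proof (intro exI[of _ "\<lambda>\<epsilon>. 56 / \<epsilon>"] conjI ballI allI impI)
  fix \<epsilon> :: real assume "\<epsilon> \<in> {0<..1}"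
  then show "56 / \<epsilon> > 0" by simp
next
  fix \<epsilon> :: real and K :: "(real^3) set" and \<Sigma> and \<gamma> :: "real \<Rightarrow> real^3" and \<gamma>' \<gamma>'' L
  assume A: "0 < \<epsilon> \<and> \<epsilon> \<le> 1 \<and> convex K \<and> ball 0 \<epsilon> \<subseteq> K \<and> K \<subseteq> ball 0 1 \<and>
       \<Sigma> = frontier K \<and> smooth_surface \<Sigma> \<and>
       0 \<le> L \<and> \<gamma> ` {0..L} \<subseteq> \<Sigma> \<and>
       (\<forall>s\<in>{0..L}. (\<gamma> has_vector_derivative \<gamma>' s) (at s within {0..L}) \<and>
                    (\<gamma>' has_vector_derivative \<gamma>'' s) (at s within {0..L}) \<and>
                    norm (\<gamma>' s) = 1) \<and>
       continuous_on {0..L} \<gamma>'' \<and>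
       curve_length \<gamma> 0 L = intrinsic_dist \<Sigma> (\<gamma> 0) (\<gamma> L)"
  then have ep: "0 < \<epsilon>" and cK: "convex K" and bK: "ball 0 \<epsilon> \<subseteq> K" and Kb: "K \<subseteq> ball 0 1"
    and Sg: "\<Sigma> = frontier K" and sm: "smooth_surface \<Sigma>" and L0: "0 \<le> L" and img: "\<gamma> ` {0..L} \<subseteq> \<Sigma>"
    and dd: "\<forall>s\<in>{0..L}. (\<gamma> has_vector_derivative \<gamma>' s) (at s within {0..L}) \<and>
                    (\<gamma>' has_vector_derivative \<gamma>'' s) (at s within {0..L}) \<and> norm (\<gamma>' s) = 1"
    and c2: "continuous_on {0..L} \<gamma>''" and sp: "curve_length \<gamma> 0 L = intrinsic_dist \<Sigma> (\<gamma> 0) (\<gamma> L)"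
    by auto
  interpret g: geo \<epsilon> K \<gamma> \<gamma>' \<gamma>'' L
    using ep cK bK Kb sm L0 img dd c2 sp unfolding Sg by unfold_locales auto
  have d1: "\<And>s. s \<in> {0..L} \<Longrightarrow> (\<gamma> has_vector_derivative \<gamma>' s) (at s within {0..L})" using dd by auto
  have d2: "\<And>s. s \<in> {0..L} \<Longrightarrow> (\<gamma>' has_vector_derivative \<gamma>'' s) (at s within {0..L})" using dd by auto
  have un: "\<And>s. s \<in> {0..L} \<Longrightarrow> norm (\<gamma>' s) = 1" using dd by auto
  have "ereal L \<le> curve_length \<gamma> 0 L" by (rule curve_length_ge[OF L0 d1 un g.c1])
  also have "\<dots> = intrinsic_dist (frontier K) (\<gamma> 0) (\<gamma> L)" using sp Sg by simp
  also have "\<dots> \<le> ereal 54" by (rule g.diam) (use img Sg L0 in auto)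
  finally have L54: "L \<le> 54" by simp
  show "integral {0..L} (\<lambda>s. norm (\<gamma>'' s)) \<le> 56 / \<epsilon>"
  proof (cases "L = 0")
    case True then show ?thesis using ep by simp
  next
    case False
    then have Lp: "0 < L" using L0 by simp
    have hcont: "continuous_on {0..L} (\<lambda>s. \<epsilon> * norm (\<gamma>'' s) + \<gamma>'' s \<bullet> \<gamma> s)"
      by (intro continuous_intros c2 g.c0)
    have pw: "\<epsilon> * norm (\<gamma>'' s) \<le> - (\<gamma>'' s \<bullet> \<gamma> s)" if s: "s \<in> {0..L}" for s
    proof -
      have "\<epsilon> * norm (\<gamma>'' s) + \<gamma>'' s \<bullet> \<gamma> s \<le> 0"
      proof (rule continuous_le_on_closure[where S="{0<..<L}" and f="\<lambda>s. \<epsilon> * norm (\<gamma>'' s) + \<gamma>'' s \<bullet> \<gamma> s" and x=s and a=0])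
        show "continuous_on (closure {0<..<L}) (\<lambda>s. \<epsilon> * norm (\<gamma>'' s) + \<gamma>'' s \<bullet> \<gamma> s)" using hcont Lp by simp
        show "s \<in> closure {0<..<L}" using s Lp by simp
        fix x assume "x \<in> {0<..<L}"
        then show "\<epsilon> * norm (\<gamma>'' x) + \<gamma>'' x \<bullet> \<gamma> x \<le> 0" using g.geo_curv[of x] by simp
      qed
      then show ?thesis by simp
    qed
    have der: "((\<lambda>s. \<gamma>' s \<bullet> \<gamma> s) has_vector_derivative (\<gamma>' s \<bullet> \<gamma>' s + \<gamma>'' s \<bullet> \<gamma> s)) (at s within {0..L})"
      if "s \<in> {0..L}" for s
      using bounded_bilinear.has_vector_derivative[OF bounded_bilinear_inner d2[OF that] d1[OF that]] by simp
    have h1: "((\<lambda>s. \<gamma>' s \<bullet> \<gamma>' s + \<gamma>'' s \<bullet> \<gamma> s) has_integral (\<gamma>' L \<bullet> \<gamma> L - \<gamma>' 0 \<bullet> \<gamma> 0)) {0..L}"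
      by (rule fundamental_theorem_of_calculus[OF L0 der])
    have h2: "((\<lambda>s. 1 + \<gamma>'' s \<bullet> \<gamma> s) has_integral (\<gamma>' L \<bullet> \<gamma> L - \<gamma>' 0 \<bullet> \<gamma> 0)) {0..L}"
      by (rule has_integral_eq[OF _ h1]) (use un in \<open>simp add: norm_eq_1[symmetric]\<close>)
    have h3: "((\<lambda>s. (1::real)) has_integral L) {0..L}" using has_integral_const_real[of "1::real" 0 L] L0 by simp
    have h4: "((\<lambda>s. - (\<gamma>'' s \<bullet> \<gamma> s)) has_integral (L - (\<gamma>' L \<bullet> \<gamma> L - \<gamma>' 0 \<bullet> \<gamma> 0))) {0..L}"
      using has_integral_diff[OF h3 h2] by simp
    have "(\<lambda>s. norm (\<gamma>'' s)) integrable_on {0..L}"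
      by (intro integrable_continuous_interval continuous_intros c2)
    then have h5: "((\<lambda>s. \<epsilon> * norm (\<gamma>'' s)) has_integral (\<epsilon> * integral {0..L} (\<lambda>s. norm (\<gamma>'' s)))) {0..L}"
      by (intro has_integral_mult_right) auto
    have le: "\<epsilon> * integral {0..L} (\<lambda>s. norm (\<gamma>'' s)) \<le> L - (\<gamma>' L \<bullet> \<gamma> L - \<gamma>' 0 \<bullet> \<gamma> 0)"
      by (rule has_integral_le[OF h5 h4]) (use pw in auto)
    have b: "\<bar>\<gamma>' t \<bullet> \<gamma> t\<bar> \<le> 1" if "t \<in> {0..L}" for t
    proof -
      have "\<bar>\<gamma>' t \<bullet> \<gamma> t\<bar> \<le> norm (\<gamma>' t) * norm (\<gamma> t)" by (rule Cauchy_Schwarz_ineq2)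
      also have "\<dots> \<le> 1" using un[OF that] g.gnorm[OF that] by simp
      finally show ?thesis .
    qed
    have "\<epsilon> * integral {0..L} (\<lambda>s. norm (\<gamma>'' s)) \<le> 56"
      using le b[of 0] b[of L] L0 L54 by (auto simp: abs_le_iff)
    then show ?thesis using ep by (simp add: field_simps)
  qed
qed



end
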